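(* Let $G$ be the graph constructed as follows. Take three vertex-disjoint copies $H_1,H_2,H_3$ of $K_2\vee\overline{K_2}$ ($K_4$ minus an edge). In each $H_i$ choose a vertex $v_i$ of degree $2$. Add a new vertex $u$ adjacent to $v_1,v_2,v_3$. Then $G$ is a graph with $\Delta(G)=3$ containing no odd cycle of length greater than $3$, and $G$ is not $3$-edge-orientable.
   Context: $G_1\vee G_2$ denotes the join: the disjoint union of $G_1$ and $G_2$ plus all edges between them. An orientation of a graph is any digraph obtained by replacing each edge $xy$ with the arc $(x,y)$, with the arc $(y,x)$, or with both arcs. A kernel of a digraph $D$ is an independent set $S$ such that every vertex of $D-S$ has an out-neighbor in $S$. $D$ is kernel-perfect if every induced subdigraph of $D$ has a kernel. A graph $G$ is $k$-edge-orientable if its line graph $L(G)$ admits a kernel-perfect orientation in which every vertex has out-degree at most $k-1$. *)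

theory Defs
  imports Main
begin

text \<open>Simple graphs are given by a vertex set V and an edge set E of 2-element sets.\<close>

definition vdegree :: "'a set set \<Rightarrow> 'a \<Rightarrow> nat" where
  "vdegree E v = card {e \<in> E. v \<in> e}"

definition max_degree :: "'a set \<Rightarrow> 'a set set \<Rightarrow> nat" where
  "max_degree V E = Max (vdegree E ` V)"

definition is_cycle :: "'a set set \<Rightarrow> 'a list \<Rightarrow> bool" where
  "is_cycle E vs \<longleftrightarrow> length vs \<ge> 3 \<and> distinct vs \<and>
     (\<forall>i < length vs. {vs ! i, vs ! ((i + 1) mod length vs)} \<in> E)"

definition line_adj :: "'a set set \<Rightarrow> 'a set \<Rightarrow> 'a set \<Rightarrow> bool" where
  "line_adj E e f \<longleftrightarrow> e \<in> E \<and> f \<in> E \<and> e \<noteq> f \<and> e \<inter> f \<noteq> {}"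

definition is_orientation :: "('v \<Rightarrow> 'v \<Rightarrow> bool) \<Rightarrow> ('v \<times> 'v) set \<Rightarrow> bool" where
  "is_orientation adj A \<longleftrightarrow> A \<subseteq> {(x, y). adj x y} \<and>
     (\<forall>x y. adj x y \<longrightarrow> (x, y) \<in> A \<or> (y, x) \<in> A)"

definition is_kernel :: "'v set \<Rightarrow> ('v \<times> 'v) set \<Rightarrow> 'v set \<Rightarrow> bool" where
  "is_kernel W A S \<longleftrightarrow> S \<subseteq> W \<and> (\<forall>x\<in>S. \<forall>y\<in>S. (x, y) \<notin> A) \<and>
     (\<forall>x \<in> W - S. \<exists>y \<in> S. (x, y) \<in> A)"

definition kernel_perfect :: "'v set \<Rightarrow> ('v \<times> 'v) set \<Rightarrow> bool" where
  "kernel_perfect V A \<longleftrightarrow> (\<forall>W \<subseteq> V. \<exists>S. is_kernel W A S)"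

definition edge_orientable :: "'a set set \<Rightarrow> nat \<Rightarrow> bool" where
  "edge_orientable E k \<longleftrightarrow> (\<exists>A. is_orientation (line_adj E) A \<and> kernel_perfect E A \<and>
     (\<forall>e \<in> E. card {f. (e, f) \<in> A} \<le> k - 1))"

text \<open>The graph G: copy i (i = 0,1,2) of K4 minus an edge has vertices 4i, 4i+1 (the K2)
  and 4i+2, 4i+3 (the complement of K2); v_i = 4i+2 has degree 2; u = 12.\<close>
definition G_verts :: "nat set" where
  "G_verts = {0..12}"

definition G_edges :: "nat set set" where
  "G_edges = (\<Union>i \<in> {0, 1, 2::nat}.
     {{4*i, 4*i+1}, {4*i, 4*i+2}, {4*i, 4*i+3}, {4*i+1, 4*i+2}, {4*i+1, 4*i+3}, {12, 4*i+2}})"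

end

theory Submission
  imports Defs
begin

definition EL :: "nat set list" where "EL = [{8,9},{8,10},{8,11},{9,10},{9,11},{12,10},
  {4,5},{4,6},{4,7},{5,6},{5,7},{12,6},{0,1},{0,2},{0,3},{1,2},{1,3},{12,2}]"

lemma G_edges_eq: "G_edges = set EL"
  unfolding G_edges_def EL_def by (simp add: numeral_2_eq_2)

lemma vd: "vdegree G_edges v = card (set (filter (\<lambda>e. v \<in> e) EL))"
  unfolding vdegree_def G_edges_eq by (metis set_filter)

lemma vdeg_le: "v \<in> G_verts \<Longrightarrow> vdegree G_edges v \<le> 3"
proof -
  assume "v \<in> G_verts"
  then have "v \<in> set [0..<13]" by (auto simp: G_verts_def)
  then have "length (filter (\<lambda>e. v \<in> e) EL) \<le> 3"
    unfolding EL_def by (simp del: upt_Suc add: upt_rec)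
  then show ?thesis unfolding vd using card_length order_trans by blast
qed

lemma vdeg0: "vdegree G_edges 0 = 3"
  unfolding vd EL_def by (simp add: doubleton_eq_iff)

lemma maxdeg: "max_degree G_verts G_edges = 3"
  unfolding max_degree_def
proof (rule Max_eqI)
  show "finite (vdegree G_edges ` G_verts)" by (simp add: G_verts_def)
  show "\<And>y. y \<in> vdegree G_edges ` G_verts \<Longrightarrow> y \<le> 3" using vdeg_le by blast
  show "3 \<in> vdegree G_edges ` G_verts" using vdeg0 unfolding G_verts_def by force
qed

lemma mod2: "(c::nat) < n \<Longrightarrow> a < n \<Longrightarrow> (c + a) mod n = (if c + a < n then c + a else c + a - n)"
  by (simp add: mod_if)
lemma mod_cancel: assumes "(a::nat) < n" "b < n" "(j + a) mod n = (j + b) mod n" shows "a = b"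
proof -
  have c: "j mod n < n" using assms by simp
  have "(j mod n + a) mod n = (j mod n + b) mod n" using assms(3) by (simp add: mod_add_left_eq)
  then show ?thesis using mod2[OF c assms(1)] mod2[OF c assms(2)] assms by (auto split: if_splits)
qed

lemma edge_le12: "{a,b} \<in> G_edges \<Longrightarrow> a \<le> 12"
  unfolding G_edges_eq EL_def by (auto simp: doubleton_eq_iff)

lemma edge_block: "{a,b} \<in> G_edges \<Longrightarrow> a \<noteq> 12 \<Longrightarrow> b \<noteq> 12 \<Longrightarrow> a div 4 = b div 4"
  unfolding G_edges_eq EL_def by (auto simp: doubleton_eq_iff)

lemma edge12: "{a,12} \<in> G_edges \<Longrightarrow> a \<in> {2,6,10}"
  unfolding G_edges_eq EL_def by (auto simp: doubleton_eq_iff)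

lemma div4_range: "(x::nat) div 4 = b \<Longrightarrow> x \<in> {4*b..<4*b+4}"
  by auto

lemma no_long_cycle:
  assumes cyc: "is_cycle G_edges vs" and len: "length vs > 4"
  shows False
proof -
  define n where "n = length vs"
  have E: "\<And>k. k < n \<Longrightarrow> {vs ! k, vs ! ((k + 1) mod n)} \<in> G_edges"
    using cyc unfolding is_cycle_def n_def by blast
  have dist: "distinct vs" using cyc unfolding is_cycle_def by blast
  have n4: "n > 4" using len n_def by simp
  show False
  proof (cases "12 \<in> set vs")
    case False
    have ne: "\<And>k. k < n \<Longrightarrow> vs ! k \<noteq> 12" using False n_def by (metis nth_mem)
    have blk: "k < n \<Longrightarrow> vs ! k div 4 = vs ! 0 div 4" for k
    proof (induction k)
      case 0 then show ?case by simp
    next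
      case (Suc k)
      have "(k + 1) mod n = Suc k" using Suc.prems by simp
      then have "{vs ! k, vs ! Suc k} \<in> G_edges" using E[of k] Suc.prems by simp
      then have "vs ! k div 4 = vs ! Suc k div 4" using edge_block ne Suc.prems by simp
      then show ?case using Suc by simp
    qed
    have "set vs \<subseteq> {4*(vs!0 div 4)..<4*(vs!0 div 4)+4}"
    proof
      fix x assume "x \<in> set vs"
      then obtain k where "k < n" "x = vs ! k" unfolding n_def by (metis in_set_conv_nth)
      then show "x \<in> {4*(vs!0 div 4)..<4*(vs!0 div 4)+4}" using blk div4_range by metis
    qed
    then have "card (set vs) \<le> 4" using card_mono[of "{4*(vs!0 div 4)..<4*(vs!0 div 4)+4}"] by simp
    then show False using distinct_card[OF dist] n4 n_def by simp
  next
    case True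
    then obtain i where i: "i < n" "vs ! i = 12" unfolding n_def by (metis in_set_conv_nth)
    define w where "w k = vs ! ((i + 1 + k) mod n)" for k
    have npos: "n > 0" using n4 by simp
    have last: "(i + 1 + (n - 1)) mod n = i" using i npos by simp
    have wne: "w k \<noteq> 12" if "k < n - 1" for k
    proof
      assume "w k = 12"
      then have "vs ! ((i + 1 + k) mod n) = vs ! i" using i unfolding w_def by simp
      then have "(i + 1 + k) mod n = i" using dist i npos nth_eq_iff_index_eq n_def
        by (metis mod_less_divisor)
      then have pe: "(i + 1 + k) mod n = (i + 1 + (n - 1)) mod n" using last by simp
      have "k < n" "n - 1 < n" using that npos by auto
      from mod_cancel[OF this pe] have "k = n - 1" .
      then show False using that by simp
    qed
    have ew: "{w k, w (Suc k)} \<in> G_edges" for k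
    proof -
      have "((i + 1 + k) mod n + 1) mod n = (i + 1 + Suc k) mod n" by (simp add: mod_Suc_eq)
      then show ?thesis using E[of "(i + 1 + k) mod n"] npos unfolding w_def by simp
    qed
    have blk: "k < n - 1 \<Longrightarrow> w k div 4 = w 0 div 4" for k
    proof (induction k)
      case 0 then show ?case by simp
    next
      case (Suc k)
      have "w k div 4 = w (Suc k) div 4" using edge_block[OF ew[of k]] wne Suc.prems by simp
      then show ?case using Suc by simp
    qed
    have w0: "{w 0, 12} \<in> G_edges" using E[OF i(1)] i unfolding w_def by (simp add: insert_commute)
    have wl: "w (n - 1) = 12" using last i unfolding w_def by simp
    have w2: "{w (n - 2), 12} \<in> G_edges" using ew[of "n - 2"] wl n4 by (simp add: Suc_diff_Suc numeral_2_eq_2)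
    have a: "w 0 \<in> {2,6,10}" using edge12[OF w0] .
    have b: "w (n - 2) \<in> {2,6,10}" using edge12[OF w2] .
    have "w (n - 2) div 4 = w 0 div 4" using blk[of "n - 2"] n4 by simp
    then have eq: "w (n - 2) = w 0" using a b by auto
    have "(i + 1 + (n - 2)) mod n = (i + 1 + 0) mod n"
      using eq dist npos nth_eq_iff_index_eq n_def unfolding w_def by (metis mod_less_divisor)
    moreover have "n - 2 < n" "0 < n" using npos by auto
    ultimately have "n - 2 = 0" using mod_cancel by blast
    then show False using n4 by simp
  qed
qed

lemma gadget:
  fixes R :: "'b \<Rightarrow> 'b \<Rightarrow> bool"
  assumes "R e p \<or> R p e" "R e q \<or> R q e" "R e r \<or> R r e" "R e s \<or> R s e"
    "R p q \<or> R q p" "R p r \<or> R r p" "R q s \<or> R s q" "R r s \<or> R s r"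
  and "(R p e \<and> R r e) \<or> (R e p \<and> R r p) \<or> (R e r \<and> R p r)"
      "(R q e \<and> R s e) \<or> (R e q \<and> R s q) \<or> (R e s \<and> R q s)"
      "(R p e \<and> R q e) \<or> (R e p \<and> R q p) \<or> (R e q \<and> R p q)"
      "(R r e \<and> R s e) \<or> (R e r \<and> R s r) \<or> (R e s \<and> R r s)"
      "(R p a \<and> R q a) \<or> (R a p \<and> R q p) \<or> (R a q \<and> R p q)"
  and "\<not> (R e p \<and> R e q \<and> R e r)" "\<not> (R e p \<and> R e q \<and> R e s)"
      "\<not> (R e p \<and> R e r \<and> R e s)" "\<not> (R e q \<and> R e r \<and> R e s)"
      "\<not> (R p e \<and> R p q \<and> R p r)" "\<not> (R p e \<and> R p q \<and> R p a)"
      "\<not> (R p e \<and> R p r \<and> R p a)" "\<not> (R p q \<and> R p r \<and> R p a)"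
      "\<not> (R q e \<and> R q p \<and> R q s)" "\<not> (R q e \<and> R q p \<and> R q a)"
      "\<not> (R q e \<and> R q s \<and> R q a)" "\<not> (R q p \<and> R q s \<and> R q a)"
      "\<not> (R r e \<and> R r p \<and> R r s)" "\<not> (R s e \<and> R s q \<and> R s r)"
  shows "R a p \<or> R a q"
  using assms by argo

lemma cov_lem: "is_orientation (line_adj E) A \<Longrightarrow> X \<in> E \<Longrightarrow> Y \<in> E \<Longrightarrow> X \<noteq> Y \<Longrightarrow> X \<inter> Y \<noteq> {}
  \<Longrightarrow> (X, Y) \<in> A \<or> (Y, X) \<in> A"
  by (simp add: is_orientation_def line_adj_def)

lemma kernel_tri:
  assumes k: "is_kernel {X,Y,Z} A S" and d: "X \<noteq> Y" "X \<noteq> Z" "Y \<noteq> Z"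
    and c: "(X,Y) \<in> A \<or> (Y,X) \<in> A" "(X,Z) \<in> A \<or> (Z,X) \<in> A" "(Y,Z) \<in> A \<or> (Z,Y) \<in> A"
  shows "((Y,X) \<in> A \<and> (Z,X) \<in> A) \<or> ((X,Y) \<in> A \<and> (Z,Y) \<in> A) \<or> ((X,Z) \<in> A \<and> (Y,Z) \<in> A)"
proof -
  from k have sub: "S \<subseteq> {X,Y,Z}" and ind: "\<forall>a\<in>S. \<forall>b\<in>S. (a,b) \<notin> A"
    and dom: "\<forall>a\<in>{X,Y,Z}-S. \<exists>b\<in>S. (a,b) \<in> A" unfolding is_kernel_def by auto
  consider "X \<in> S" | "Y \<in> S" | "Z \<in> S" | "S = {}" using sub by blast
  then show ?thesis
  proof cases
    case 1
    have "Y \<notin> S" "Z \<notin> S" using ind c 1 by blast+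
    then have "\<forall>b\<in>S. b = X" using sub by blast
    moreover have "\<exists>b\<in>S. (Y,b) \<in> A" "\<exists>b\<in>S. (Z,b) \<in> A" using dom \<open>Y \<notin> S\<close> \<open>Z \<notin> S\<close> by blast+
    ultimately show ?thesis by auto
  next
    case 2
    have "X \<notin> S" "Z \<notin> S" using ind c 2 by blast+
    then have "\<forall>b\<in>S. b = Y" using sub by blast
    moreover have "\<exists>b\<in>S. (X,b) \<in> A" "\<exists>b\<in>S. (Z,b) \<in> A" using dom \<open>X \<notin> S\<close> \<open>Z \<notin> S\<close> by blast+
    ultimately show ?thesis by auto
  next
    case 3
    have "X \<notin> S" "Y \<notin> S" using ind c 3 by blast+
    then have "\<forall>b\<in>S. b = Z" using sub by blast
    moreover have "\<exists>b\<in>S. (X,b) \<in> A" "\<exists>b\<in>S. (Y,b) \<in> A" using dom \<open>X \<notin> S\<close> \<open>Y \<notin> S\<close> by blast+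
    ultimately show ?thesis by auto
  next
    case 4
    then show ?thesis using dom by blast
  qed
qed

lemma sink_lem:
  assumes o: "is_orientation (line_adj E) A" and kp: "kernel_perfect E A"
    and m: "X \<in> E" "Y \<in> E" "Z \<in> E" and d: "X \<noteq> Y" "X \<noteq> Z" "Y \<noteq> Z"
    and i: "X \<inter> Y \<noteq> {}" "X \<inter> Z \<noteq> {}" "Y \<inter> Z \<noteq> {}"
  shows "((Y,X) \<in> A \<and> (Z,X) \<in> A) \<or> ((X,Y) \<in> A \<and> (Z,Y) \<in> A) \<or> ((X,Z) \<in> A \<and> (Y,Z) \<in> A)"
proof -
  have "{X,Y,Z} \<subseteq> E" using m by auto
  then obtain S where S: "is_kernel {X,Y,Z} A S" using kp unfolding kernel_perfect_def by blast
  have c1: "(X,Y) \<in> A \<or> (Y,X) \<in> A" by (rule cov_lem[OF o m(1) m(2) d(1) i(1)])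
  have c2: "(X,Z) \<in> A \<or> (Z,X) \<in> A" by (rule cov_lem[OF o m(1) m(3) d(2) i(2)])
  have c3: "(Y,Z) \<in> A \<or> (Z,Y) \<in> A" by (rule cov_lem[OF o m(2) m(3) d(3) i(3)])
  show ?thesis by (rule kernel_tri[OF S d c1 c2 c3])
qed

lemma out_lem:
  assumes "(z,f1) \<in> A" "(z,f2) \<in> A" "(z,f3) \<in> A" and o: "is_orientation (line_adj E) A"
    and fin: "finite E" and c: "card {f. (z,f) \<in> A} \<le> 2"
    and "f1 \<noteq> f2" "f1 \<noteq> f3" "f2 \<noteq> f3"
  shows False
proof -
  have sub: "{f. (z,f) \<in> A} \<subseteq> E" using o unfolding is_orientation_def line_adj_def by auto
  have "card {f1,f2,f3} \<le> card {f. (z,f) \<in> A}"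
    by (rule card_mono) (use sub fin finite_subset assms in auto)
  then show False using assms c by simp
qed

lemma fin_G: "finite G_edges" by (simp add: G_edges_def)

lemma gadget_inst:
  fixes x y v w u :: nat
  assumes o: "is_orientation (line_adj E) A" and kp: "kernel_perfect E A"
    and deg: "\<forall>e\<in>E. card {f. (e,f) \<in> A} \<le> 2" and fin: "finite E"
    and dist: "distinct [x,y,v,w,u]"
    and mem: "{x,y} \<in> E" "{x,v} \<in> E" "{x,w} \<in> E" "{y,v} \<in> E" "{y,w} \<in> E" "{u,v} \<in> E"
  shows "({u,v},{x,v}) \<in> A \<or> ({u,v},{y,v}) \<in> A"
proof -
  note cov = cov_lem[OF o]
  note sink = sink_lem[OF o kp]
  note out = out_lem[OF _ _ _ o fin deg[rule_format]]
  have out': "\<not> ((z,f1) \<in> A \<and> (z,f2) \<in> A \<and> (z,f3) \<in> A)"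
    if "z \<in> E" "f1 \<noteq> f2" "f1 \<noteq> f3" "f2 \<noteq> f3" for z f1 f2 f3
    using out that by blast
  have d: "x \<noteq> y" "x \<noteq> v" "x \<noteq> w" "x \<noteq> u" "y \<noteq> v" "y \<noteq> w" "y \<noteq> u" "v \<noteq> w" "v \<noteq> u" "w \<noteq> u"
    "y \<noteq> x" "v \<noteq> x" "w \<noteq> x" "u \<noteq> x" "v \<noteq> y" "w \<noteq> y" "u \<noteq> y" "w \<noteq> v" "u \<noteq> v" "u \<noteq> w"
    using dist by auto
  show ?thesis
    apply (rule gadget[where R="\<lambda>x y. (x,y) \<in> A" and e="{x,y}" and p="{x,v}"
       and q="{y,v}" and r="{x,w}" and s="{y,w}"])
    apply (rule cov; simp add: mem doubleton_eq_iff d)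
    apply (rule cov; simp add: mem doubleton_eq_iff d)
    apply (rule cov; simp add: mem doubleton_eq_iff d)
    apply (rule cov; simp add: mem doubleton_eq_iff d)
    apply (rule cov; simp add: mem doubleton_eq_iff d)
    apply (rule cov; simp add: mem doubleton_eq_iff d)
    apply (rule cov; simp add: mem doubleton_eq_iff d)
    apply (rule cov; simp add: mem doubleton_eq_iff d)
    apply (rule sink; simp add: mem doubleton_eq_iff d)
    apply (rule sink; simp add: mem doubleton_eq_iff d)
    apply (rule sink; simp add: mem doubleton_eq_iff d)
    apply (rule sink; simp add: mem doubleton_eq_iff d)
    apply (rule sink; simp add: mem doubleton_eq_iff d)
    apply (rule out'; simp add: mem doubleton_eq_iff d)
    apply (rule out'; simp add: mem doubleton_eq_iff d)
    apply (rule out'; simp add: mem doubleton_eq_iff d)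
    apply (rule out'; simp add: mem doubleton_eq_iff d)
    apply (rule out'; simp add: mem doubleton_eq_iff d)
    apply (rule out'; simp add: mem doubleton_eq_iff d)
    apply (rule out'; simp add: mem doubleton_eq_iff d)
    apply (rule out'; simp add: mem doubleton_eq_iff d)
    apply (rule out'; simp add: mem doubleton_eq_iff d)
    apply (rule out'; simp add: mem doubleton_eq_iff d)
    apply (rule out'; simp add: mem doubleton_eq_iff d)
    apply (rule out'; simp add: mem doubleton_eq_iff d)
    apply (rule out'; simp add: mem doubleton_eq_iff d)
    apply (rule out'; simp add: mem doubleton_eq_iff d)
    done
qed

lemma no_orient: "\<not> edge_orientable G_edges 3"
proof
  assume "edge_orientable G_edges 3"
  then obtain A where o: "is_orientation (line_adj G_edges) A" and kp: "kernel_perfect G_edges A"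
    and deg0: "\<forall>e \<in> G_edges. card {f. (e, f) \<in> A} \<le> 3 - 1"
    unfolding edge_orientable_def by blast
  have deg: "\<forall>e \<in> G_edges. card {f. (e, f) \<in> A} \<le> 2" using deg0 by simp
  have fin: "finite G_edges" by (rule fin_G)
  have m: "{0,1} \<in> G_edges" "{0,2} \<in> G_edges" "{0,3} \<in> G_edges" "{1,2} \<in> G_edges" "{1,3} \<in> G_edges" "{12,2} \<in> G_edges"
    "{4,5} \<in> G_edges" "{4,6} \<in> G_edges" "{4,7} \<in> G_edges" "{5,6} \<in> G_edges" "{5,7} \<in> G_edges" "{12,6} \<in> G_edges"
    "{8,9} \<in> G_edges" "{8,10} \<in> G_edges" "{8,11} \<in> G_edges" "{9,10} \<in> G_edges" "{9,11} \<in> G_edges" "{12,10} \<in> G_edges"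
    unfolding G_edges_eq EL_def by simp_all
  have g0: "({12,2},{0,2}) \<in> A \<or> ({12,2},{1,2}) \<in> A"
    by (rule gadget_inst[OF o kp deg fin, of 0 1 2 3 12]) (simp, (fact m)+)
  have g1: "({12,6},{4,6}) \<in> A \<or> ({12,6},{5,6}) \<in> A"
    by (rule gadget_inst[OF o kp deg fin, of 4 5 6 7 12]) (simp, (fact m)+)
  have g2: "({12,10},{8,10}) \<in> A \<or> ({12,10},{9,10}) \<in> A"
    by (rule gadget_inst[OF o kp deg fin, of 8 9 10 11 12]) (simp, (fact m)+)
  have tri: "(({12,6},{12,2}) \<in> A \<and> ({12,10},{12,2}) \<in> A) \<or> (({12,2},{12,6}) \<in> A \<and> ({12,10},{12,6}) \<in> A)
     \<or> (({12,2},{12,10}) \<in> A \<and> ({12,6},{12,10}) \<in> A)"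
    by (rule sink_lem[OF o kp]) (simp_all add: m doubleton_eq_iff)
  have c1: "({12,2},{12,6}) \<in> A \<or> ({12,6},{12,2}) \<in> A" by (rule cov_lem[OF o]) (simp_all add: m doubleton_eq_iff)
  have c2: "({12,2},{12,10}) \<in> A \<or> ({12,10},{12,2}) \<in> A" by (rule cov_lem[OF o]) (simp_all add: m doubleton_eq_iff)
  have c3: "({12,6},{12,10}) \<in> A \<or> ({12,10},{12,6}) \<in> A" by (rule cov_lem[OF o]) (simp_all add: m doubleton_eq_iff)
  note out = out_lem[OF _ _ _ o fin deg[rule_format]]
  have o1: "\<not> (({12,2},{12,6}) \<in> A \<and> ({12,2},{12,10}) \<in> A \<and> ({12,2},{0,2}) \<in> A)"
    using out[of "{12,2}" "{12,6}" "{12,10}" "{0,2}"] by (auto simp: m doubleton_eq_iff)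
  have o2: "\<not> (({12,2},{12,6}) \<in> A \<and> ({12,2},{12,10}) \<in> A \<and> ({12,2},{1,2}) \<in> A)"
    using out[of "{12,2}" "{12,6}" "{12,10}" "{1,2}"] by (auto simp: m doubleton_eq_iff)
  have o3: "\<not> (({12,6},{12,2}) \<in> A \<and> ({12,6},{12,10}) \<in> A \<and> ({12,6},{4,6}) \<in> A)"
    using out[of "{12,6}" "{12,2}" "{12,10}" "{4,6}"] by (auto simp: m doubleton_eq_iff)
  have o4: "\<not> (({12,6},{12,2}) \<in> A \<and> ({12,6},{12,10}) \<in> A \<and> ({12,6},{5,6}) \<in> A)"
    using out[of "{12,6}" "{12,2}" "{12,10}" "{5,6}"] by (auto simp: m doubleton_eq_iff)
  have o5: "\<not> (({12,10},{12,2}) \<in> A \<and> ({12,10},{12,6}) \<in> A \<and> ({12,10},{8,10}) \<in> A)"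
    using out[of "{12,10}" "{12,2}" "{12,6}" "{8,10}"] by (auto simp: m doubleton_eq_iff)
  have o6: "\<not> (({12,10},{12,2}) \<in> A \<and> ({12,10},{12,6}) \<in> A \<and> ({12,10},{9,10}) \<in> A)"
    using out[of "{12,10}" "{12,2}" "{12,6}" "{9,10}"] by (auto simp: m doubleton_eq_iff)
  show False using g0 g1 g2 tri c1 c2 c3 o1 o2 o3 o4 o5 o6 by argo
qed

theorem mainTheorem20:
  shows "max_degree G_verts G_edges = 3
    \<and> \<not> (\<exists>vs. is_cycle G_edges vs \<and> odd (length vs) \<and> length vs > 3)
    \<and> \<not> edge_orientable G_edges 3"
proof (intro conjI)
  show "max_degree G_verts G_edges = 3" by (rule maxdeg)
  show "\<not> (\<exists>vs. is_cycle G_edges vs \<and> odd (length vs) \<and> length vs > 3)"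
  proof
    assume "\<exists>vs. is_cycle G_edges vs \<and> odd (length vs) \<and> length vs > 3"
    then obtain vs where "is_cycle G_edges vs" "odd (length vs)" "length vs > 3" by blast
    moreover have "length vs \<noteq> 4" using \<open>odd (length vs)\<close> by auto
    ultimately show False using no_long_cycle by fastforce
  qed
  show "\<not> edge_orientable G_edges 3" by (rule no_orient)
qed

end
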